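(* Let $s\ge2$. There exists a constant $c>0$ (depending on $s$) such that $\|r\|_{U^s[2^L]}=O(2^{-cL})$ as $L\to\infty$.
   Context: Let $r(n)=(-1)^{f_{11}(n)}$ be the Rudin-Shapiro sequence, $f_{11}(n)$ being the number of occurrences of the block $11$ in the binary expansion of $n$. Write $[M]=\{0,\dots,M-1\}$. For $f\colon[M]\to\mathbb{R}$, the Gowers norm is $\|f\|_{U^s[M]}^{2^s}=\mathbb{E}_{n,\mathbf h}\prod_{\omega\in\{0,1\}^s}f(n+\omega\cdot\mathbf h)$, with $\omega\cdot\mathbf h=\sum_{i=1}^s\omega_ih_i$ and the expectation over all $n\in\mathbb{Z}$, $\mathbf h\in\mathbb{Z}^s$ with $\{n+\omega\cdot\mathbf h:\omega\in\{0,1\}^s\}\subset[M]$. *)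

theory Defs
  imports Complex_Main "HOL-Library.Landau_Symbols"
begin

definition f11 :: "nat \<Rightarrow> nat" where
  "f11 n = card {k. odd (n div 2 ^ k) \<and> odd (n div 2 ^ (Suc k))}"

text \<open>Rudin-Shapiro sequence (only evaluated at nonnegative integers).\<close>
definition rudin_shapiro :: "int \<Rightarrow> real" where
  "rudin_shapiro n = (-1) ^ f11 (nat n)"

text \<open>omega in {0,1}^s is encoded as a subset S of {..<s};
  omega . h = sum over i in S of h_i; h is a list of length s.\<close>
definition gowers_params :: "nat \<Rightarrow> nat \<Rightarrow> (int \<times> int list) set" where
  "gowers_params s M = {(n, h). length h = s \<and>
      (\<forall>S \<in> Pow {..<s}. n + (\<Sum>i\<in>S. h ! i) \<in> {0..<int M})}"

definition gowers_pow :: "(int \<Rightarrow> real) \<Rightarrow> nat \<Rightarrow> nat \<Rightarrow> real" where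
  "gowers_pow f s M = (\<Sum>p\<in>gowers_params s M.
      \<Prod>S\<in>Pow {..<s}. f (fst p + (\<Sum>i\<in>S. snd p ! i))) / real (card (gowers_params s M))"

definition gowers_norm :: "(int \<Rightarrow> real) \<Rightarrow> nat \<Rightarrow> nat \<Rightarrow> real" where
  "gowers_norm f s M = root (2 ^ s) (gowers_pow f s M)"

end

theory Submission
  imports Defs
begin


lemma K_finite: "finite {k. odd ((n::nat) div 2^k) \<and> odd (n div 2^Suc k)}"
proof (rule finite_subset[of _ "{..<n}"])
  show "{k. odd (n div 2^k) \<and> odd (n div 2^Suc k)} \<subseteq> {..<n}"
  proof
    fix k assume "k \<in> {k. odd (n div 2^k) \<and> odd (n div 2^Suc k)}"
    then have "n div 2^k \<noteq> 0" by (metis (mono_tags) even_zero mem_Collect_eq)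
    then have "2^k \<le> n" by (simp add: div_eq_0_iff not_less)
    then show "k \<in> {..<n}" using less_exp[of k] by (simp only: lessThan_iff)
  qed
qed simp

lemma set_split0: "{k::nat. P k} = (if P 0 then {0} else {}) \<union> Suc ` {k. P (Suc k)}"
proof -
  have "x \<in> {k. P k} \<longleftrightarrow> x \<in> (if P 0 then {0} else {}) \<union> Suc ` {k. P (Suc k)}" for x
    by (cases x) auto
  then show ?thesis by blast
qed

lemma f11_step:
  assumes "d \<le> 1"
  shows "f11 (2*m+d) = f11 m + (if d = 1 \<and> odd m then 1 else 0)"
proof -
  have e1: "(2*m+d) div 2^Suc k = m div 2^k" for k
  proof -
    have "(2*m+d) div 2^Suc k = ((2*m+d) div 2) div 2^k"
      by (simp add: div_mult2_eq)
    also have "(2*m+d) div 2 = m" using assms by auto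
    finally show ?thesis .
  qed
  have e0: "odd (2*m+d) \<and> odd ((2*m+d) div 2^Suc 0) \<longleftrightarrow> d = 1 \<and> odd m"
    using assms e1[of 0] by (cases d) auto
  have "{k. odd ((2*m+d) div 2^k) \<and> odd ((2*m+d) div 2^Suc k)}
      = (if d = 1 \<and> odd m then {0} else {}) \<union> Suc ` {k. odd (m div 2^k) \<and> odd (m div 2^Suc k)}"
    apply (subst set_split0)
    using e0 e1 by (simp del: power_Suc)
  moreover have "0 \<notin> Suc ` X" for X by auto
  ultimately show ?thesis
    unfolding f11_def using K_finite[of m]
    by (simp add: card_image del: power_Suc)
qed

lemma f11_0: "f11 0 = 0" unfolding f11_def by simp
lemma f11_1: "f11 1 = 0" using f11_step[of 1 0] f11_0 by simp

lemma f11_shift: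
  assumes "u < 2^Suc j"
  shows "f11 (2^Suc j*m+u) = f11 u + f11 m + (if u \<ge> 2^j \<and> odd m then 1 else 0)"
  using assms
proof (induction j arbitrary: u)
  case 0
  then have "u = 0 \<or> u = 1" by auto
  then show ?case using f11_step[of u m] f11_0 f11_1 by auto
next
  case (Suc j)
  define u' d where "u' = u div 2" and "d = u mod 2"
  have u: "u = 2*u'+d" and d: "d \<le> 1" unfolding u'_def d_def by auto
  have u'b: "u' < 2^Suc j" using Suc.prems u unfolding u'_def by auto
  have eq: "2^Suc (Suc j)*m+u = 2*(2^Suc j * m + u') + d" using u by simp
  have od: "odd (2^Suc j * m + u') = odd u'" by simp
  have "f11 (2^Suc (Suc j)*m+u) = f11 (2^Suc j * m + u') + (if d = 1 \<and> odd (2^Suc j * m + u') then 1 else 0)"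
    unfolding eq by (rule f11_step[OF d])
  also have "\<dots> = f11 (2^Suc j * m + u') + (if d = 1 \<and> odd u' then 1 else 0)"
    by (simp only: od)
  also have "\<dots> = f11 u' + f11 m + (if u' \<ge> 2^j \<and> odd m then 1 else 0) + (if d = 1 \<and> odd u' then 1 else 0)"
    using Suc.IH[OF u'b] by simp
  moreover have "f11 u = f11 u' + (if d = 1 \<and> odd u' then 1 else 0)" using u f11_step[OF d] by simp
  moreover have "u' \<ge> 2^j \<longleftrightarrow> u \<ge> 2^Suc j" using u d by auto
  ultimately show ?case by simp
qed



lemma rs_shift:
  fixes m u :: int
  assumes "0 \<le> m" "0 \<le> u" "u < 2^Suc j"
  shows "rudin_shapiro (2^Suc j * m + u) = rudin_shapiro u * rudin_shapiro m * (if u \<ge> 2^j \<and> odd m then -1 else 1)"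
proof -
  have a: "nat (2^Suc j * m + u) = nat (2^Suc j * m) + nat u"
    using assms by (intro nat_add_distrib) auto
  have b: "nat (2^Suc j * m) = nat (2^Suc j) * nat m"
    using assms by (intro nat_mult_distrib) auto
  have c: "nat ((2::int)^Suc j) = 2^Suc j" by (simp only: nat_power_eq) simp
  have n: "nat (2^Suc j * m + u) = 2^Suc j * nat m + nat u" using a b c by simp
  have ub: "nat u < 2^Suc j" using assms(3) by (simp only: nat_less_iff[OF assms(2)]) simp
  have c: "(2^j \<le> nat u) = (2^j \<le> u)" using assms(2) by (simp only: le_nat_iff[OF assms(2)]) simp
  have o: "odd (nat m) = odd m" using assms by (simp add: even_nat_iff)
  show ?thesis unfolding rudin_shapiro_def n f11_shift[OF ub] c o
    by (simp add: power_add)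
qed

definition dot :: "int list \<Rightarrow> nat set \<Rightarrow> int" where "dot h S = (\<Sum>i\<in>S. h!i)"

definition PP :: "nat \<Rightarrow> nat \<Rightarrow> (nat set \<Rightarrow> int) \<Rightarrow> (int \<times> int list) set" where
  "PP s L e = {(n,h). length h = s \<and> (\<forall>S\<in>Pow{..<s}. n + dot h S + e S \<in> {0..<2^L})}"

definition RR :: "(nat set \<Rightarrow> bool) \<Rightarrow> nat set \<Rightarrow> int \<Rightarrow> real" where
  "RR c S x = rudin_shapiro x * (if c S \<and> odd x then -1 else 1)"

definition GG :: "nat \<Rightarrow> nat \<Rightarrow> (nat set \<Rightarrow> bool) \<Rightarrow> (nat set \<Rightarrow> int) \<Rightarrow> real" where
  "GG s L c e = (\<Sum>p\<in>PP s L e. \<Prod>S\<in>Pow{..<s}. RR c S (fst p + dot (snd p) S + e S))"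

definition Box :: "nat \<Rightarrow> nat \<Rightarrow> (int \<times> int list) set" where
  "Box s j = {(A,B). A \<in> {0..<2^Suc j} \<and> length B = s \<and> (\<forall>i<s. B!i \<in> {0..<2^Suc j})}"

definition TT :: "(nat set \<Rightarrow> int) \<Rightarrow> int \<Rightarrow> int list \<Rightarrow> nat set \<Rightarrow> int" where
  "TT e A B S = A + dot B S + e S"
definition qq where "qq j e A B S = TT e A B S div 2^Suc j"
definition uu where "uu j e A B S = TT e A B S mod 2^Suc j"
definition cc where "cc j e A B S = (uu j e A B S \<ge> 2^j)"
definition WW where "WW s j c e A B = (\<Prod>S\<in>Pow{..<s}. RR c S (uu j e A B S))"

definition enc :: "nat \<Rightarrow> (int \<times> int list) \<times> (int \<times> int list) \<Rightarrow> int \<times> int list" where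
  "enc j x = (case x of ((A,B),(n,h)) \<Rightarrow> (2^Suc j*n+A, map2 (\<lambda>b y. 2^Suc j*y+b) B h))"
definition dec :: "nat \<Rightarrow> int \<times> int list \<Rightarrow> (int \<times> int list) \<times> (int \<times> int list)" where
  "dec j p = (case p of (n,h) \<Rightarrow> ((n mod 2^Suc j, map (\<lambda>y. y mod 2^Suc j) h), (n div 2^Suc j, map (\<lambda>y. y div 2^Suc j) h)))"

lemma RR_shift:
  fixes m u :: int
  assumes "0 \<le> m" "0 \<le> u" "u < 2^Suc j" "c' S = (u \<ge> 2^j)"
  shows "RR c S (2^Suc j * m + u) = RR c S u * RR c' S m"
proof -
  have "odd (2^Suc j * m + u) = odd u" by simp
  then show ?thesis unfolding RR_def rs_shift[OF assms(1-3)] using assms(4) by auto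
qed

lemma range_shift:
  fixes m u :: int
  assumes "0 \<le> u" "u < 2^Suc j"
  shows "(2^Suc j * m + u \<in> {0..<2^(L + Suc j)}) = (m \<in> {0..<2^L})"
proof -
  define P :: int where "P = 2^Suc j"
  have p: "0 < P" unfolding P_def by simp
  have pl: "(2::int)^(L + Suc j) = P * 2^L" unfolding P_def by (simp add: power_add)
  have u: "0 \<le> u" "u < P" using assms unfolding P_def by auto
  have 1: "0 \<le> P * m + u \<longleftrightarrow> 0 \<le> m"
  proof
    assume h: "0 \<le> P * m + u"
    show "0 \<le> m"
    proof (rule ccontr)
      assume "\<not> 0 \<le> m" then have "m + 1 \<le> 0" by simp
      then have "P * (m+1) \<le> P * 0" using p by (intro mult_left_mono) auto
      then show False using h u by (simp add: algebra_simps)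
    qed
  next
    assume "0 \<le> m" then have "0 \<le> P * m" using p by simp
    then show "0 \<le> P * m + u" using u by linarith
  qed
  have 2: "P * m + u < P * 2^L \<longleftrightarrow> m < 2^L"
  proof
    assume h: "P * m + u < P * 2^L"
    show "m < 2^L"
    proof (rule ccontr)
      assume "\<not> m < 2^L" then have "2^L \<le> m" by simp
      then have "P * 2^L \<le> P * m" using p by (intro mult_left_mono) auto
      then show False using h u by linarith
    qed
  next
    assume "m < 2^L" then have "m + 1 \<le> 2^L" by simp
    then have "P * (m+1) \<le> P * 2^L" using p by (intro mult_left_mono) auto
    then show "P * m + u < P * 2^L" using u by (simp add: algebra_simps)
  qed
  show ?thesis unfolding pl using 1 2 unfolding P_def by auto
qed

lemma dot_map2:
  assumes "length B = s" "length h = s" "S \<subseteq> {..<s}"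
  shows "dot (map2 (\<lambda>b y. 2^Suc j*y+b) B h) S = 2^Suc j * dot h S + dot B S"
proof -
  have "dot (map2 (\<lambda>b y. 2^Suc j*y+b) B h) S = (\<Sum>i\<in>S. 2^Suc j * h!i + B!i)"
    unfolding dot_def using assms by (intro sum.cong) auto
  then show ?thesis unfolding dot_def by (simp add: sum.distrib sum_distrib_left)
qed

lemma enc_identity:
  assumes "length B = s" "length h = s" "S \<subseteq> {..<s}"
  shows "fst (enc j ((A,B),(n,h))) + dot (snd (enc j ((A,B),(n,h)))) S + e S
     = 2^Suc j * (n + dot h S + qq j e A B S) + uu j e A B S"
proof -
  have "TT e A B S = 2^Suc j * qq j e A B S + uu j e A B S"
    unfolding qq_def uu_def by simp
  then show ?thesis unfolding enc_def using dot_map2[OF assms, of j]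
    by (simp add: TT_def algebra_simps)
qed



lemma PP_finite: "finite (PP s L e)"
proof -
  define K :: int where "K = 2*2^L + \<bar>e {}\<bar> + (\<Sum>i<s. \<bar>e {i}\<bar>)"
  have "PP s L e \<subseteq> {-\<bar>e {}\<bar>..2^L + \<bar>e {}\<bar>} \<times> {xs. set xs \<subseteq> {-K..K} \<and> length xs = s}"
  proof
    fix p assume p: "p \<in> PP s L e"
    obtain n h where nh: "p = (n,h)" by (cases p)
    have len: "length h = s" and P: "\<forall>S\<in>Pow{..<s}. n + dot h S + e S \<in> {0..<2^L}"
      using p unfolding nh PP_def by auto
    have n0: "n + e {} \<in> {0..<2^L}" using P[rule_format, of "{}"] by (simp add: dot_def)
    have "\<bar>h!i\<bar> \<le> K" if i: "i < s" for i
    proof -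
      have "n + h!i + e {i} \<in> {0..<2^L}" using P[rule_format, of "{i}"] i by (simp add: dot_def)
      moreover have "\<bar>e {i}\<bar> \<le> (\<Sum>i<s. \<bar>e {i}\<bar>)"
        using i by (intro member_le_sum) auto
      ultimately show ?thesis using n0 unfolding K_def by auto
    qed
    then have "set h \<subseteq> {-K..K}" using len by (fastforce simp: in_set_conv_nth abs_le_iff minus_le_iff)
    then show "p \<in> {-\<bar>e {}\<bar>..2^L + \<bar>e {}\<bar>} \<times> {xs. set xs \<subseteq> {-K..K} \<and> length xs = s}"
      using n0 len unfolding nh by auto
  qed
  moreover have "finite ({-\<bar>e {}\<bar>..2^L + \<bar>e {}\<bar>} \<times> {xs. set xs \<subseteq> {-K..K} \<and> length xs = s})"
    by (intro finite_cartesian_product finite_lists_length_eq) auto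
  ultimately show ?thesis by (rule finite_subset)
qed

lemma Box_finite: "finite (Box s j)"
proof -
  have "Box s j \<subseteq> {0..<(2::int)^Suc j} \<times> {xs. set xs \<subseteq> {0..<(2::int)^Suc j} \<and> length xs = s}"
    unfolding Box_def by (auto simp: in_set_conv_nth)
  moreover have "finite ({0..<(2::int)^Suc j} \<times> {xs. set xs \<subseteq> {0..<(2::int)^Suc j} \<and> length xs = s})"
    by (intro finite_cartesian_product finite_lists_length_eq) auto
  ultimately show ?thesis by (rule finite_subset)
qed

lemma uu_range: "0 \<le> uu j e A B S" "uu j e A B S < 2^Suc j"
  unfolding uu_def by auto

lemma enc_dec: "length h = s \<Longrightarrow> enc j (dec j (n,h)) = (n,h)"
  unfolding enc_def dec_def by (auto intro!: nth_equalityI)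

lemma dec_enc:
  assumes "(A,B) \<in> Box s j" "length h = s"
  shows "dec j (enc j ((A,B),(n,h))) = ((A,B),(n,h))"
proof -
  have A: "0 \<le> A" "A < 2^Suc j" and B: "length B = s" "\<And>i. i < s \<Longrightarrow> 0 \<le> B!i \<and> B!i < 2^Suc j"
    using assms unfolding Box_def by auto
  have "(2^Suc j * n + A) mod 2^Suc j = A" using A by simp
  moreover have "(2^Suc j * n + A) div 2^Suc j = n" using A by simp
  moreover have "map (\<lambda>y. y mod 2^Suc j) (map2 (\<lambda>b y. 2^Suc j*y+b) B h) = B"
    using B assms(2) by (auto intro!: nth_equalityI)
  moreover have "map (\<lambda>y. y div 2^Suc j) (map2 (\<lambda>b y. 2^Suc j*y+b) B h) = h"
    using B assms(2) by (auto intro!: nth_equalityI)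
  ultimately show ?thesis unfolding enc_def dec_def by simp
qed

lemma enc_F:
  assumes "(A,B) \<in> Box s j" "(n,h) \<in> PP s L (qq j e A B)"
  shows "(\<Prod>S\<in>Pow{..<s}. RR c S (fst (enc j ((A,B),(n,h))) + dot (snd (enc j ((A,B),(n,h)))) S + e S))
     = WW s j c e A B * (\<Prod>S\<in>Pow{..<s}. RR (cc j e A B) S (n + dot h S + qq j e A B S))"
proof -
  have B: "length B = s" using assms unfolding Box_def by auto
  have h: "length h = s" and m: "\<And>S. S \<in> Pow{..<s} \<Longrightarrow> n + dot h S + qq j e A B S \<in> {0..<2^L}"
    using assms unfolding PP_def by auto
  have "(\<Prod>S\<in>Pow{..<s}. RR c S (fst (enc j ((A,B),(n,h))) + dot (snd (enc j ((A,B),(n,h)))) S + e S))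
     = (\<Prod>S\<in>Pow{..<s}. RR c S (uu j e A B S) * RR (cc j e A B) S (n + dot h S + qq j e A B S))"
  proof (intro prod.cong refl)
    fix S assume S: "S \<in> Pow{..<s}"
    show "RR c S (fst (enc j ((A,B),(n,h))) + dot (snd (enc j ((A,B),(n,h)))) S + e S)
      = RR c S (uu j e A B S) * RR (cc j e A B) S (n + dot h S + qq j e A B S)"
    proof -
      have eq: "fst (enc j ((A,B),(n,h))) + dot (snd (enc j ((A,B),(n,h)))) S + e S
          = 2^Suc j * (n + dot h S + qq j e A B S) + uu j e A B S"
        using enc_identity[OF B h] S by auto
      show ?thesis unfolding eq
        using m[OF S] uu_range by (intro RR_shift) (auto simp: cc_def)
    qed
  qed
  then show ?thesis unfolding WW_def by (simp add: prod.distrib)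
qed

theorem decomp:
  "GG s (L + Suc j) c e = (\<Sum>ab\<in>Box s j. WW s j c e (fst ab) (snd ab) *
       GG s L (cc j e (fst ab) (snd ab)) (qq j e (fst ab) (snd ab)))"
proof -
  define H where "H = (\<lambda>(ab::int\<times>int list, x::int\<times>int list). WW s j c e (fst ab) (snd ab) *
     (\<Prod>S\<in>Pow{..<s}. RR (cc j e (fst ab) (snd ab)) S (fst x + dot (snd x) S + qq j e (fst ab) (snd ab) S)))"
  define F where "F = (\<lambda>p::int\<times>int list. \<Prod>S\<in>Pow{..<s}. RR c S (fst p + dot (snd p) S + e S))"
  define T where "T = Sigma (Box s j) (\<lambda>ab. PP s L (qq j e (fst ab) (snd ab)))"
  have HF: "H b = F (enc j b)" if b: "b \<in> T" for b
  proof -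
    obtain A B n h where bb: "b = ((A,B),(n,h))" by (metis prod.collapse)
    show ?thesis using b enc_F[of A B s j n h L e c] unfolding bb T_def H_def F_def by auto
  qed
  have rb: "sum F (PP s (L + Suc j) e) = sum H T"
  proof (rule sum.reindex_bij_witness[where i = "enc j" and j = "dec j"])
    fix b assume b: "b \<in> T"
    obtain A B n h where bb: "b = ((A,B),(n,h))" by (metis prod.collapse)
    have Bx: "(A,B) \<in> Box s j" and nh: "(n,h) \<in> PP s L (qq j e A B)" using b unfolding bb T_def by auto
    have len: "length B = s" "length h = s" using Bx nh unfolding Box_def PP_def by auto
    show "dec j (enc j b) = b" unfolding bb using dec_enc[OF Bx len(2)] .
    have "length (snd (enc j b)) = s" unfolding bb enc_def using len by simp
    moreover have "fst (enc j b) + dot (snd (enc j b)) S + e S \<in> {0..<2^(L + Suc j)}"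
      if S: "S \<in> Pow {..<s}" for S
    proof -
      have eq: "fst (enc j b) + dot (snd (enc j b)) S + e S
          = 2^Suc j * (n + dot h S + qq j e A B S) + uu j e A B S"
        using enc_identity[OF len] S unfolding bb by auto
      show ?thesis unfolding eq
        using nh S uu_range unfolding PP_def by (subst range_shift) auto
    qed
    ultimately show "enc j b \<in> PP s (L + Suc j) e" unfolding PP_def
      by (cases "enc j b") auto
  next
    fix a assume a: "a \<in> PP s (L + Suc j) e"
    obtain n h where aa: "a = (n,h)" by (cases a)
    have len: "length h = s" and P: "\<forall>S\<in>Pow{..<s}. n + dot h S + e S \<in> {0..<2^(L + Suc j)}"
      using a unfolding aa PP_def by auto
    show ed: "enc j (dec j a) = a" unfolding aa using enc_dec[OF len] .
    define A where "A = n mod 2^Suc j"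
    define B where "B = map (\<lambda>y. y mod 2^Suc j) h"
    define n' where "n' = n div 2^Suc j"
    define h' where "h' = map (\<lambda>y. y div 2^Suc j) h"
    have da: "dec j a = ((A,B),(n',h'))" unfolding aa dec_def A_def B_def n'_def h'_def by simp
    have Bx: "(A,B) \<in> Box s j" unfolding Box_def A_def B_def using len by auto
    have len2: "length B = s" "length h' = s" unfolding B_def h'_def using len by auto
    have "(n',h') \<in> PP s L (qq j e A B)"
      unfolding PP_def
    proof (clarsimp simp: len2)
      fix S assume S: "S \<subseteq> {..<s}"
      have "fst (enc j ((A,B),(n',h'))) + dot (snd (enc j ((A,B),(n',h')))) S + e S \<in> {0..<2^(L + Suc j)}"
      proof -
        have e2: "enc j ((A,B),(n',h')) = (n,h)" using ed da aa by simp
        show ?thesis unfolding e2 using P S by auto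
      qed
      then show "0 \<le> n' + dot h' S + qq j e A B S \<and> n' + dot h' S + qq j e A B S < 2 ^ L"
        unfolding enc_identity[OF len2 S] using uu_range by (subst (asm) range_shift) auto
    qed
    then show "dec j a \<in> T" unfolding da T_def using Bx by auto
    show "H (dec j a) = F a"
      using HF[of "dec j a"] ed \<open>dec j a \<in> T\<close> by simp
  qed
  have "(\<Sum>ab\<in>Box s j. WW s j c e (fst ab) (snd ab) *
       GG s L (cc j e (fst ab) (snd ab)) (qq j e (fst ab) (snd ab)))
     = (\<Sum>ab\<in>Box s j. \<Sum>x\<in>PP s L (qq j e (fst ab) (snd ab)). H (ab, x))"
    unfolding GG_def H_def by (simp add: sum_distrib_left)
  also have "\<dots> = (\<Sum>(ab,x)\<in>T. H (ab,x))" unfolding T_def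
    by (rule sum.Sigma) (auto simp: Box_finite PP_finite)
  also have "\<dots> = sum H T" by (simp add: case_prod_eta)
  finally show ?thesis using rb by (simp add: GG_def F_def)
qed



lemma card_diff0:
  assumes "S \<subseteq> {..<s}"
  shows "card (S - {0}) \<le> s - 1" and "card (S - {0}) = s - 1 \<Longrightarrow> 0 \<in> S \<Longrightarrow> S = {..<s}"
proof -
  have sub: "S - {0} \<subseteq> {1..<s}" using assms by auto
  have cs: "card {1..<s} = s - 1" by simp
  show "card (S - {0}) \<le> s - 1" using card_mono[OF finite_atLeastLessThan sub] cs by linarith
  assume c: "card (S - {0}) = s - 1" and z: "0 \<in> S"
  have eq: "S - {0} = {1..<s}" using card_subset_eq[OF finite_atLeastLessThan sub] c cs by linarith
  show "S = {..<s}"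
  proof
    show "{..<s} \<subseteq> S"
    proof
      fix x assume x: "x \<in> {..<s}"
      show "x \<in> S"
      proof (cases "x = 0")
        case True then show ?thesis using z by simp
      next
        case False then have "x \<in> {1..<s}" using x by simp
        then have "x \<in> S - {0}" using eq by blast
        then show ?thesis by blast
      qed
    qed
    show "S \<subseteq> {..<s}" by (rule assms)
  qed
qed

lemma ineqs:
  fixes p s' b :: int
  assumes s2: "2 \<le> s'" and p: "2 * s'^2 \<le> p" and b: "b = p div (s' - 1) + 1"
  shows "(s' - 1) * b > p" and "(s' - 1) * b + s' < 2 * p" and "(s' - 2) * b + s' < p" and "0 < b"
proof -
  define d r where "d = p div (s' - 1)" and "r = p mod (s' - 1)"
  have pr: "p = (s' - 1) * d + r" unfolding d_def r_def by simp
  have r: "0 \<le> r" "r < s' - 1" unfolding r_def using s2 by auto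
  have bd: "b = d + 1" unfolding b d_def by simp
  have "(s' - 1) * b = (s' - 1) * d + (s' - 1)" unfolding bd by (simp add: distrib_left)
  then have e1: "(s' - 1) * b = p - r + s' - 1" using pr by linarith
  show "(s' - 1) * b > p" using e1 r by linarith
  have sq: "s'^2 = s' * s'" by (simp add: power2_eq_square)
  have "s' * 1 \<le> s' * s'" using s2 by (intro mult_left_mono) auto
  then have "2 * s' \<le> 2 * s'^2" unfolding sq by linarith
  then show "(s' - 1) * b + s' < 2 * p" using e1 r p s2 by linarith
  have dr: "(s' - 1) * d = p - r" using pr by linarith
  have ex: "(s' - 1) * (2 * s' - 1) = 2 * (s' * s') - 3 * s' + 1"
    by (simp add: left_diff_distrib right_diff_distrib distrib_left distrib_right)
  have "p - r > 2 * (s' * s') - 3 * s' + 1" using p r s2 unfolding sq by linarith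
  then have "(s' - 1) * d > (s' - 1) * (2 * s' - 1)" using dr ex by linarith
  moreover have "0 < s' - 1" using s2 by simp
  ultimately have dd: "d > 2 * s' - 1" using mult_less_cancel_left_pos by blast
  have "(s' - 2) * b = (s' - 1) * b - b" by (simp add: left_diff_distrib)
  then show "(s' - 2) * b + s' < p" using e1 dd bd r by linarith
  show "0 < b" using dd bd s2 by linarith
qed

definition valid :: "nat \<Rightarrow> (nat set \<Rightarrow> int) \<Rightarrow> bool" where
  "valid s e \<longleftrightarrow> (\<forall>S\<in>Pow{..<s}. 0 \<le> e S \<and> e S \<le> int s)"

lemma rs_1: "rudin_shapiro 1 = 1" unfolding rudin_shapiro_def using f11_1 by simp

lemma abs_rs: "\<bar>rudin_shapiro x\<bar> = 1" unfolding rudin_shapiro_def by (simp add: power_abs)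
lemma abs_RR: "\<bar>RR c S x\<bar> = 1" unfolding RR_def by (simp add: abs_rs abs_mult)
lemma abs_prod_RR: "\<bar>\<Prod>S\<in>X. RR (c S) S (x S)\<bar> = 1"
  by (simp only: abs_prod abs_RR prod.neutral_const)



definition jj :: "nat \<Rightarrow> nat" where "jj s = 2*s*s + 2"
definition pp :: "nat \<Rightarrow> int" where "pp s = 2^(2*s*s)"
definition bb :: "nat \<Rightarrow> int" where "bb s = pp s div (int s - 1) + 1"
definition B1 :: "nat \<Rightarrow> int list" where "B1 s = 0 # replicate (s-1) (bb s)"
definition B2 :: "nat \<Rightarrow> int list" where "B2 s = (2 * pp s) # replicate (s-1) (bb s)"

lemma pp_big: "2 * (int s)^2 \<le> pp s"
proof -
  have "2*s*s < (2::nat)^(2*s*s)" by (rule less_exp)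
  then have "int (2*s*s) < int ((2::nat)^(2*s*s))" by linarith
  then show ?thesis unfolding pp_def by (simp add: power2_eq_square)
qed

lemma pp_pos: "0 < pp s" unfolding pp_def by simp

lemma blk: "(2::int)^Suc (jj s) = 8 * pp s" and half: "(2::int)^jj s = 4 * pp s"
  and pk: "(2::int)^Suc (2*s*s) = 2 * pp s"
  unfolding jj_def pp_def by (simp_all add: power_add)

lemma bb_facts:
  assumes "2 \<le> s"
  shows "(int s - 1) * bb s > pp s" "(int s - 1) * bb s + int s < 2 * pp s"
    "(int s - 2) * bb s + int s < pp s" "0 < bb s"
  using ineqs[of "int s" "pp s" "bb s"] assms pp_big[of s] unfolding bb_def by auto

lemma nth_B1: "i < s \<Longrightarrow> B1 s ! i = (if i = 0 then 0 else bb s)"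
  unfolding B1_def by (cases i) auto
lemma nth_B2: "i < s \<Longrightarrow> B2 s ! i = B1 s ! i + (if i = 0 then 2 * pp s else 0)"
  unfolding B1_def B2_def by (cases i) auto

lemma len_B: "2 \<le> s \<Longrightarrow> length (B1 s) = s" "2 \<le> s \<Longrightarrow> length (B2 s) = s"
  unfolding B1_def B2_def by auto

lemma dot_B1:
  assumes "S \<subseteq> {..<s}"
  shows "dot (B1 s) S = bb s * int (card (S - {0}))"
proof -
  have "dot (B1 s) S = (\<Sum>i\<in>S. if i = 0 then 0 else bb s)"
    unfolding dot_def using assms nth_B1 by (intro sum.cong) auto
  also have "\<dots> = (\<Sum>i\<in>S - {0}. bb s)"
    using assms by (intro sum.mono_neutral_cong_right) (auto intro: finite_subset)
  also have "\<dots> = bb s * int (card (S - {0}))" by simp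
  finally show ?thesis .
qed

lemma dot_B2:
  assumes "S \<subseteq> {..<s}"
  shows "dot (B2 s) S = dot (B1 s) S + (if 0 \<in> S then 2 * pp s else 0)"
proof -
  have fin: "finite S" using assms by (rule finite_subset) simp
  have "dot (B2 s) S = (\<Sum>i\<in>S. B1 s ! i + (if i = 0 then 2 * pp s else 0))"
    unfolding dot_def using assms nth_B2 by (intro sum.cong) auto
  also have "\<dots> = dot (B1 s) S + (\<Sum>i\<in>S. if i = 0 then 2 * pp s else 0)"
    unfolding dot_def by (simp add: sum.distrib)
  also have "(\<Sum>i\<in>S. if i = 0 then 2 * pp s else 0) = (if 0 \<in> S then 2 * pp s else 0)"
    using fin by (simp add: sum.delta)
  finally show ?thesis .
qed

lemma Box_B:
  assumes "2 \<le> s"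
  shows "(0, B1 s) \<in> Box s (jj s)" "(0, B2 s) \<in> Box s (jj s)"
proof -
  have f: "(int s - 1) * bb s + int s < 2 * pp s" "0 < bb s" using bb_facts[OF assms] by auto
  have "1 * bb s \<le> (int s - 1) * bb s" using assms f(2) by (intro mult_right_mono) auto
  then have b: "0 < bb s" "bb s < 8 * pp s" using f pp_pos[of s] by linarith+
  have pp: "0 < pp s" by (rule pp_pos)
  have e1: "B1 s ! i \<in> {0..<8 * pp s}" if "i < s" for i
    using nth_B1[OF that] b pp by auto
  have e2: "B2 s ! i \<in> {0..<8 * pp s}" if "i < s" for i
    using nth_B2[OF that] nth_B1[OF that] b pp by auto
  show "(0, B1 s) \<in> Box s (jj s)" unfolding Box_def blk using e1 len_B[OF assms] pp by simp
  show "(0, B2 s) \<in> Box s (jj s)" unfolding Box_def blk using e2 len_B[OF assms] pp by simp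
qed

lemma T1_facts:
  assumes s2: "2 \<le> s" and v: "valid s e" and S: "S \<subseteq> {..<s}"
  shows "0 \<le> TT e 0 (B1 s) S" "TT e 0 (B1 s) S < 2 * pp s"
    "pp s \<le> TT e 0 (B1 s) S \<longleftrightarrow> card (S - {0}) = s - 1"
proof -
  define k where "k = card (S - {0})"
  have T: "TT e 0 (B1 s) S = bb s * int k + e S" unfolding TT_def k_def dot_B1[OF S] by simp
  have ev: "0 \<le> e S" "e S \<le> int s" using v S unfolding valid_def by auto
  have k: "k \<le> s - 1" unfolding k_def by (rule card_diff0(1)[OF S])
  have f: "(int s - 1) * bb s > pp s" "(int s - 1) * bb s + int s < 2 * pp s"
    "(int s - 2) * bb s + int s < pp s" "0 < bb s" using bb_facts[OF s2] by auto
  have c1: "bb s * int k + e S < 2 * pp s \<and> (pp s \<le> bb s * int k + e S \<longleftrightarrow> k = s - 1)"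
  proof (cases "k = s - 1")
    case True
    then have "int k = int s - 1" using s2 by simp
    then have "bb s * int k = (int s - 1) * bb s" by (simp add: mult.commute)
    then show ?thesis using f ev True by linarith
  next
    case False
    then have "int k \<le> int s - 2" using k s2 by linarith
    then have "bb s * int k \<le> bb s * (int s - 2)" using f(4) by (intro mult_left_mono) auto
    then have "bb s * int k \<le> (int s - 2) * bb s" by (simp add: mult.commute)
    then show ?thesis using f ev False by linarith
  qed
  have "0 \<le> bb s * int k" using f(4) by simp
  then show "0 \<le> TT e 0 (B1 s) S" using T ev by linarith
  show "TT e 0 (B1 s) S < 2 * pp s" using T c1 by linarith
  show "pp s \<le> TT e 0 (B1 s) S \<longleftrightarrow> card (S - {0}) = s - 1" using T c1 unfolding k_def by simp
qed

lemma T2_eq: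
  assumes "S \<subseteq> {..<s}"
  shows "TT e 0 (B2 s) S = TT e 0 (B1 s) S + (if 0 \<in> S then 2 * pp s else 0)"
  unfolding TT_def dot_B2[OF assms] by simp

lemma small_T:
  assumes "0 \<le> T" "T < 4 * pp s"
  shows "T mod 2^Suc (jj s) = T" "T div 2^Suc (jj s) = 0" "\<not> (T mod 2^Suc (jj s) \<ge> 2^jj s)"
proof -
  have p: "0 < pp s" by (rule pp_pos)
  show m: "T mod 2^Suc (jj s) = T" unfolding blk using assms p by simp
  show "T div 2^Suc (jj s) = 0" unfolding blk using assms p by simp
  show "\<not> (T mod 2^Suc (jj s) \<ge> 2^jj s)" unfolding m half using assms by simp
qed

lemma RR_flip:
  assumes s2: "2 \<le> s" and v: "valid s e" and S: "S \<subseteq> {..<s}"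
  shows "RR c S (TT e 0 (B2 s) S) = (if S = {..<s} then -1 else 1) * RR c S (TT e 0 (B1 s) S)"
proof (cases "0 \<in> S")
  case False
  then have "S \<noteq> {..<s}" using s2 by auto
  then show ?thesis using False T2_eq[OF S] by simp
next
  case True
  define T where "T = TT e 0 (B1 s) S"
  have T: "0 \<le> T" "T < 2 ^ Suc (2*s*s)" using T1_facts[OF s2 v S] unfolding T_def pk by auto
  have eq: "TT e 0 (B2 s) S = 2 ^ Suc (2*s*s) * 1 + T" using T2_eq[OF S] True unfolding T_def pk by simp
  have o: "odd (2 ^ Suc (2*s*s) * 1 + T) = odd T" by simp
  have c: "(2 ^ (2*s*s) \<le> T) = (S = {..<s})"
  proof -
    have "(2 ^ (2*s*s) \<le> T) = (card (S - {0}) = s - 1)"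
      using T1_facts(3)[OF s2 v S] unfolding T_def pp_def by simp
    also have "\<dots> = (S = {..<s})"
    proof
      assume "card (S - {0}) = s - 1" then show "S = {..<s}" using card_diff0(2)[OF S] True by blast
    next
      assume "S = {..<s}" then show "card (S - {0}) = s - 1" using s2 by (simp add: card_Diff_singleton)
    qed
    finally show ?thesis .
  qed
  have rsx: "rudin_shapiro (2 ^ Suc (2*s*s) * 1 + T) = (if S = {..<s} then -1 else 1) * rudin_shapiro T"
    using rs_shift[OF _ T(1) T(2), of 1] rs_1 c by simp
  show ?thesis unfolding eq RR_def T_def[symmetric] o rsx by simp
qed

theorem cancel:
  assumes s2: "2 \<le> s" and v: "valid s e"
  shows "(0, B1 s) \<in> Box s (jj s)" "(0, B2 s) \<in> Box s (jj s)" "(0, B1 s) \<noteq> (0, B2 s)"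
    "\<And>S. S \<in> Pow {..<s} \<Longrightarrow> cc (jj s) e 0 (B1 s) S = cc (jj s) e 0 (B2 s) S"
    "\<And>S. S \<in> Pow {..<s} \<Longrightarrow> qq (jj s) e 0 (B1 s) S = qq (jj s) e 0 (B2 s) S"
    "WW s (jj s) c e 0 (B2 s) = - WW s (jj s) c e 0 (B1 s)"
proof -
  show "(0, B1 s) \<in> Box s (jj s)" "(0, B2 s) \<in> Box s (jj s)" using Box_B[OF s2] by auto
  have "0 < pp s" by (rule pp_pos)
  then show "(0, B1 s) \<noteq> (0, B2 s)" unfolding B1_def B2_def by simp
  have r1: "0 \<le> TT e 0 (B1 s) S" "TT e 0 (B1 s) S < 4 * pp s" if "S \<in> Pow {..<s}" for S
    using T1_facts[OF s2 v, of S] that by auto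
  have r2: "0 \<le> TT e 0 (B2 s) S" "TT e 0 (B2 s) S < 4 * pp s" if "S \<in> Pow {..<s}" for S
    using T1_facts[OF s2 v, of S] T2_eq[of S s e] that pp_pos[of s] by auto
  show "cc (jj s) e 0 (B1 s) S = cc (jj s) e 0 (B2 s) S" if "S \<in> Pow {..<s}" for S
    unfolding cc_def uu_def using small_T(3)[OF r1[OF that]] small_T(3)[OF r2[OF that]] by simp
  show "qq (jj s) e 0 (B1 s) S = qq (jj s) e 0 (B2 s) S" if "S \<in> Pow {..<s}" for S
    unfolding qq_def using small_T(2)[OF r1[OF that]] small_T(2)[OF r2[OF that]] by simp
  have "WW s (jj s) c e 0 (B2 s) = (\<Prod>S\<in>Pow {..<s}. (if S = {..<s} then -1 else 1) * RR c S (uu (jj s) e 0 (B1 s) S))"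
    unfolding WW_def
  proof (intro prod.cong refl)
    fix S assume S: "S \<in> Pow {..<s}"
    show "RR c S (uu (jj s) e 0 (B2 s) S) = (if S = {..<s} then -1 else 1) * RR c S (uu (jj s) e 0 (B1 s) S)"
      unfolding uu_def small_T(1)[OF r1[OF S]] small_T(1)[OF r2[OF S]] using RR_flip[OF s2 v] S by simp
  qed
  also have "\<dots> = (\<Prod>S\<in>Pow {..<s}. (if S = {..<s} then -1 else 1)) * WW s (jj s) c e 0 (B1 s)"
    unfolding WW_def by (simp add: prod.distrib)
  also have "(\<Prod>S\<in>Pow {..<s}. (if S = {..<s} then -1 else (1::real))) = -1"
    by (subst prod.delta) auto
  finally show "WW s (jj s) c e 0 (B2 s) = - WW s (jj s) c e 0 (B1 s)" by simp
qed



lemma dot_bounds: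
  assumes "(A,B) \<in> Box s j" "S \<subseteq> {..<s}"
  shows "0 \<le> dot B S" "dot B S \<le> int s * (2^Suc j - 1)"
proof -
  have Bi: "\<And>i. i \<in> S \<Longrightarrow> 0 \<le> B!i \<and> B!i \<le> 2^Suc j - 1" using assms unfolding Box_def by auto
  show "0 \<le> dot B S" unfolding dot_def using Bi by (intro sum_nonneg) auto
  have "dot B S \<le> of_nat (card S) * (2^Suc j - 1)" unfolding dot_def
    using Bi by (intro sum_bounded_above) auto
  moreover have "card S \<le> s" using card_mono[OF _ assms(2)] by simp
  then have "int (card S) * (2^Suc j - 1) \<le> int s * (2^Suc j - 1)"
    by (intro mult_right_mono) auto
  ultimately show "dot B S \<le> int s * (2^Suc j - 1)" by simp
qed

lemma qq_valid:
  assumes v: "valid s e" and ab: "(A,B) \<in> Box s j"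
  shows "valid s (qq j e A B)"
  unfolding valid_def
proof
  fix S assume S: "S \<in> Pow {..<s}"
  define P :: int where "P = 2^Suc j"
  have P: "0 < P" unfolding P_def by simp
  have A: "0 \<le> A" "A \<le> P - 1" using ab unfolding Box_def P_def by auto
  have d: "0 \<le> dot B S" "dot B S \<le> int s * (P - 1)" using dot_bounds[OF ab] S unfolding P_def by auto
  have ev: "0 \<le> e S" "e S \<le> int s" using v S unfolding valid_def by auto
  define T where "T = TT e A B S"
  have T0: "0 \<le> T" unfolding T_def TT_def using A d ev by linarith
  have "int s * (P - 1) = int s * P - int s" by (simp add: algebra_simps)
  then have T1: "T < (int s + 1) * P" unfolding T_def TT_def using A d ev by (simp add: algebra_simps)
  have q0: "0 \<le> T div P" using T0 P by (simp add: pos_imp_zdiv_nonneg_iff)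
  have "T div P < int s + 1"
  proof (rule ccontr)
    assume "\<not> T div P < int s + 1"
    then have "(int s + 1) * P \<le> (T div P) * P" using P by (intro mult_right_mono) auto
    moreover have "(T div P) * P \<le> T" using P by (simp add: mult.commute minus_mod_eq_mult_div[symmetric])
    ultimately show False using T1 by linarith
  qed
  then show "0 \<le> qq j e A B S \<and> qq j e A B S \<le> int s"
    using q0 unfolding qq_def T_def[symmetric] P_def[symmetric] by linarith
qed

lemma GG_cong:
  assumes "\<And>S. S \<in> Pow {..<s} \<Longrightarrow> c S = c' S \<and> e S = e' S"
  shows "GG s L c e = GG s L c' e'"
proof -
  have "PP s L e = PP s L e'" unfolding PP_def using assms by auto
  moreover have "(\<Prod>S\<in>Pow {..<s}. RR c S (fst p + dot (snd p) S + e S))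
      = (\<Prod>S\<in>Pow {..<s}. RR c' S (fst p + dot (snd p) S + e' S))" for p
    using assms by (intro prod.cong refl) (auto simp: RR_def)
  ultimately show ?thesis unfolding GG_def by simp
qed

lemma abs_GG: "\<bar>GG s L c e\<bar> \<le> real (card (PP s L e))"
proof -
  have "\<bar>GG s L c e\<bar> \<le> (\<Sum>p\<in>PP s L e. \<bar>\<Prod>S\<in>Pow {..<s}. RR c S (fst p + dot (snd p) S + e S)\<bar>)"
    unfolding GG_def by (rule sum_abs)
  also have "\<dots> = (\<Sum>p\<in>PP s L e. 1)"
    by (intro sum.cong refl) (rule abs_prod_RR[where c="\<lambda>_. c", simplified])
  finally show ?thesis by simp
qed

lemma abs_WW: "\<bar>WW s j c e A B\<bar> = 1"
  unfolding WW_def by (rule abs_prod_RR[where c="\<lambda>_. c", simplified])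

lemma sum_cancel:
  fixes f :: "'a \<Rightarrow> real"
  assumes X: "finite X" and ab: "a \<in> X" "b \<in> X" "a \<noteq> b" and z: "f a + f b = 0"
    and M: "\<And>x. x \<in> X \<Longrightarrow> \<bar>f x\<bar> \<le> M"
  shows "\<bar>sum f X\<bar> \<le> (real (card X) - 2) * M"
proof -
  have s1: "sum f X = f a + sum f (X - {a})" using X ab by (simp add: sum.remove)
  have b': "b \<in> X - {a}" using ab by auto
  have s2: "sum f (X - {a}) = f b + sum f (X - {a} - {b})" using X b' by (simp add: sum.remove)
  have "sum f X = sum f (X - {a} - {b})" using s1 s2 z by linarith
  also have "\<bar>\<dots>\<bar> \<le> (\<Sum>x\<in>X - {a} - {b}. \<bar>f x\<bar>)" by (rule sum_abs)
  also have "\<dots> \<le> of_nat (card (X - {a} - {b})) * M" using M by (intro sum_bounded_above) auto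
  also have "card (X - {a} - {b}) = card X - 2" using X ab b' by (simp add: card_Diff_singleton)
  also have "card X \<ge> 2"
  proof -
    have "{a,b} \<subseteq> X" using ab by auto
    then have "card {a,b} \<le> card X" using X by (rule card_mono[rotated])
    then show ?thesis using ab by simp
  qed
  then have "real (card X - 2) = real (card X) - 2" by simp
  finally show ?thesis by simp
qed

lemma card_Box: "card (Box s j) = 2^(Suc j * (s+1))"
proof -
  have "Box s j = {0..<(2::int)^Suc j} \<times> {xs. set xs \<subseteq> {0..<(2::int)^Suc j} \<and> length xs = s}"
    unfolding Box_def by (fastforce simp: in_set_conv_nth subset_iff)
  then have "card (Box s j) = card {0..<(2::int)^Suc j} * card {0..<(2::int)^Suc j} ^ s"
    by (simp add: card_cartesian_product card_lists_length_eq)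
  also have "card {0..<(2::int)^Suc j} = 2^Suc j"
  proof -
    have "card {0..<(2::int)^Suc j} = nat ((2::int)^Suc j)" by simp
    also have "\<dots> = nat 2 ^ Suc j" by (rule nat_power_eq) simp
    finally show ?thesis by simp
  qed
  finally show ?thesis by (simp add: power_mult power_add mult.commute)
qed



lemma card_PP_bound:
  assumes v: "valid s e"
  shows "real (card (PP s L e)) \<le> (2 * real s + 2)^(s+1) * (2^L)^(s+1)"
proof -
  define X :: int where "X = 2^L"
  have X1: "1 \<le> X" unfolding X_def by simp
  have sub: "PP s L e \<subseteq> {-int s..<X} \<times> {xs. set xs \<subseteq> {-X - int s..<X + int s} \<and> length xs = s}"
  proof
    fix p assume p: "p \<in> PP s L e"
    obtain n h where nh: "p = (n,h)" by (cases p)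
    have len: "length h = s" and P: "\<forall>S\<in>Pow{..<s}. n + dot h S + e S \<in> {0..<2^L}"
      using p unfolding nh PP_def by auto
    have e0: "0 \<le> e {}" "e {} \<le> int s" using v unfolding valid_def by auto
    have n0: "n + e {} \<in> {0..<X}" using P[rule_format, of "{}"] unfolding X_def by (simp add: dot_def)
    have hi: "h!i \<in> {-X - int s..<X + int s}" if i: "i < s" for i
    proof -
      have "n + h!i + e {i} \<in> {0..<X}" using P[rule_format, of "{i}"] i unfolding X_def by (simp add: dot_def)
      moreover have "0 \<le> e {i}" "e {i} \<le> int s" using v i unfolding valid_def by auto
      ultimately show ?thesis using n0 e0 by auto
    qed
    have "set h \<subseteq> {-X - int s..<X + int s}"
    proof
      fix x assume "x \<in> set h"
      then obtain i where "i < length h" "x = h!i" by (auto simp: in_set_conv_nth)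
      then show "x \<in> {-X - int s..<X + int s}" using hi len by auto
    qed
    then show "p \<in> {-int s..<X} \<times> {xs. set xs \<subseteq> {-X - int s..<X + int s} \<and> length xs = s}"
      using n0 e0 len unfolding nh by auto
  qed
  have fin: "finite ({-int s..<X} \<times> {xs. set xs \<subseteq> {-X - int s..<X + int s} \<and> length xs = s})"
    by (intro finite_cartesian_product finite_lists_length_eq) auto
  have "card (PP s L e) \<le> card ({-int s..<X} \<times> {xs. set xs \<subseteq> {-X - int s..<X + int s} \<and> length xs = s})"
    by (rule card_mono[OF fin sub])
  also have "\<dots> = nat (X + int s) * nat (2 * X + 2 * int s) ^ s"
    by (simp add: card_cartesian_product card_lists_length_eq)
  finally have c: "real (card (PP s L e)) \<le> real (nat (X + int s) * nat (2 * X + 2 * int s) ^ s)"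
    by (simp only: of_nat_le_iff)
  define Y :: real where "Y = 2^L"
  have Y1: "1 \<le> Y" unfolding Y_def by simp
  have r: "real (nat (X + int s) * nat (2 * X + 2 * int s) ^ s) = (Y + real s) * (2 * Y + 2 * real s) ^ s"
    using X1 unfolding X_def Y_def by (simp add: of_nat_mult)
  have sY: "real s * 1 \<le> real s * Y" using Y1 by (intro mult_left_mono) auto
  have ex: "(2 * real s + 2) * Y = 2 * (real s * Y) + 2 * Y" by (simp add: algebra_simps)
  have a1: "Y + real s \<le> (2 * real s + 2) * Y" using sY Y1 unfolding ex by linarith
  have a2: "2 * Y + 2 * real s \<le> (2 * real s + 2) * Y" using sY Y1 unfolding ex by linarith
  have "(Y + real s) * (2 * Y + 2 * real s) ^ s \<le> ((2 * real s + 2) * Y) * ((2 * real s + 2) * Y) ^ s"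
    using a1 a2 Y1 by (intro mult_mono power_mono) auto
  also have "\<dots> = (2 * real s + 2)^(s+1) * Y^(s+1)" by (simp add: power_mult_distrib)
  finally show ?thesis using c r unfolding Y_def by simp
qed

definition QQ :: "nat \<Rightarrow> real" where "QQ s = real (card (Box s (jj s))) - 2"
definition EE :: "nat \<Rightarrow> real" where "EE s = (2 * real s + 2)^(s+1)"

lemma QQ_nonneg: "0 \<le> QQ s"
proof -
  have "(2::nat)^2 \<le> 2^(Suc (jj s) * (s+1))" by (intro power_increasing) (auto simp: jj_def)
  then show ?thesis unfolding QQ_def card_Box by simp
qed

theorem main_bound:
  assumes s2: "2 \<le> s"
  shows "valid s e \<Longrightarrow> \<bar>GG s (L + Suc (jj s) * k) c e\<bar> \<le> EE s * (2^L)^(s+1) * QQ s ^ k"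
proof (induction k arbitrary: c e)
  case 0
  have "\<bar>GG s L c e\<bar> \<le> (2 * real s + 2)^(s+1) * (2^L)^(s+1)"
    by (rule order_trans[OF abs_GG card_PP_bound[OF 0]])
  then show ?case unfolding EE_def by simp
next
  case (Suc k)
  define J where "J = jj s"
  define M where "M = EE s * (2^L)^(s+1) * QQ s ^ k"
  define f where "f = (\<lambda>ab. WW s J c e (fst ab) (snd ab) *
       GG s (L + Suc J * k) (cc J e (fst ab) (snd ab)) (qq J e (fst ab) (snd ab)))"
  have eqL: "L + Suc J * Suc k = (L + Suc J * k) + Suc J" by simp
  have d: "GG s (L + Suc J * Suc k) c e = sum f (Box s J)"
    unfolding eqL f_def by (rule decomp)
  have Mb: "\<bar>f ab\<bar> \<le> M" if ab: "ab \<in> Box s J" for ab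
  proof -
    obtain A B where abe: "ab = (A,B)" by (cases ab)
    have "valid s (qq J e A B)" using qq_valid[OF Suc.prems] ab unfolding abe by simp
    then have "\<bar>GG s (L + Suc J * k) (cc J e A B) (qq J e A B)\<bar> \<le> M"
      using Suc.IH unfolding M_def J_def by blast
    then show ?thesis unfolding f_def abe by (simp add: abs_mult abs_WW)
  qed
  have z: "f (0, B1 s) + f (0, B2 s) = 0"
  proof -
    have "GG s (L + Suc J * k) (cc J e 0 (B1 s)) (qq J e 0 (B1 s)) = GG s (L + Suc J * k) (cc J e 0 (B2 s)) (qq J e 0 (B2 s))"
      using cancel(4,5)[OF s2 Suc.prems] unfolding J_def by (intro GG_cong) auto
    then show ?thesis unfolding f_def using cancel(6)[OF s2 Suc.prems, of c] unfolding J_def by simp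
  qed
  have "\<bar>sum f (Box s J)\<bar> \<le> (real (card (Box s J)) - 2) * M"
    using cancel(1-3)[OF s2 Suc.prems] z Mb Box_finite unfolding J_def
    by (intro sum_cancel[where a = "(0, B1 s)" and b = "(0, B2 s)"]) auto
  also have "\<dots> = EE s * (2^L)^(s+1) * QQ s ^ Suc k" unfolding M_def QQ_def J_def by simp
  finally show ?case using d unfolding J_def by simp
qed



lemma PP0: "PP s L (\<lambda>_. 0) = gowers_params s (2^L)"
  unfolding PP_def gowers_params_def dot_def by simp

lemma gp_eq: "gowers_pow rudin_shapiro s (2^L) = GG s L (\<lambda>_. False) (\<lambda>_. 0) / real (card (gowers_params s (2^L)))"
  unfolding gowers_pow_def GG_def PP0 by (simp add: RR_def dot_def)

lemma valid0: "valid s (\<lambda>_. 0)" unfolding valid_def by simp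

lemma GG_bound:
  assumes s2: "2 \<le> s"
  shows "\<bar>GG s L (\<lambda>_. False) (\<lambda>_. 0)\<bar> \<le> EE s * (2^Suc (jj s))^(s+1) * QQ s ^ (L div Suc (jj s))"
proof -
  define J where "J = Suc (jj s)"
  have L: "L = L mod J + J * (L div J)" by simp
  have "\<bar>GG s L (\<lambda>_. False) (\<lambda>_. 0)\<bar> = \<bar>GG s (L mod J + Suc (jj s) * (L div J)) (\<lambda>_. False) (\<lambda>_. 0)\<bar>"
    using L unfolding J_def by simp
  also have "\<dots> \<le> EE s * (2^(L mod J))^(s+1) * QQ s ^ (L div J)"
    by (rule main_bound[OF s2 valid0])
  also have "\<dots> \<le> EE s * (2^J)^(s+1) * QQ s ^ (L div J)"
  proof -
    have "L mod J < J" unfolding J_def by simp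
    then have "(2::real)^(L mod J) \<le> 2^J" by (intro power_increasing) auto
    then have "((2::real)^(L mod J))^(s+1) \<le> (2^J)^(s+1)" by (intro power_mono) auto
    moreover have "0 \<le> EE s" unfolding EE_def by simp
    moreover have "0 \<le> QQ s ^ (L div J)" using QQ_nonneg by simp
    ultimately show ?thesis by (intro mult_right_mono mult_left_mono) auto
  qed
  finally show ?thesis unfolding J_def .
qed

lemma card_lower:
  assumes L: "s + 1 \<le> L"
  shows "(2::real)^((L - (s+1)) * (s+1)) \<le> real (card (gowers_params s (2^L)))"
proof -
  define m :: int where "m = 2^(L - (s+1))"
  have m1: "1 \<le> m" unfolding m_def by simp
  have Lm: "(2::int)^L = 2^(s+1) * m"
  proof -
    have "(2::int)^L = 2^((s+1) + (L - (s+1)))" using L by simp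
    also have "\<dots> = 2^(s+1) * 2^(L-(s+1))" by (rule power_add)
    finally show ?thesis unfolding m_def .
  qed
  have s2: "int s + 1 < 2^(s+1)"
  proof -
    have "s + 1 < (2::nat)^(s+1)" by (rule less_exp)
    then have "int (s + 1) < int ((2::nat)^(s+1))" by linarith
    then show ?thesis by simp
  qed
  define G where "G = {0..<m} \<times> {xs. set xs \<subseteq> {0..<m} \<and> length xs = s}"
  have sub: "G \<subseteq> gowers_params s (2^L)"
  proof
    fix p assume p: "p \<in> G"
    obtain n h where nh: "p = (n,h)" by (cases p)
    have n: "0 \<le> n" "n \<le> m - 1" and len: "length h = s" and hs: "set h \<subseteq> {0..<m}"
      using p unfolding G_def nh by auto
    have hi: "0 \<le> h!i \<and> h!i \<le> m - 1" if "i < s" for i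
    proof -
      have "h!i \<in> set h" using that len by (intro nth_mem) simp
      then have "h!i \<in> {0..<m}" using hs by blast
      then show ?thesis by simp
    qed
    have "n + (\<Sum>i\<in>S. h!i) \<in> {0..<int (2^L)}" if S: "S \<subseteq> {..<s}" for S
    proof -
      have "0 \<le> (\<Sum>i\<in>S. h!i)" using hi S by (intro sum_nonneg) auto
      moreover have "(\<Sum>i\<in>S. h!i) \<le> of_nat (card S) * (m - 1)"
        using hi S by (intro sum_bounded_above) auto
      moreover have "card S \<le> s" using card_mono[OF _ S] by simp
      then have "int (card S) * (m - 1) \<le> int s * (m - 1)" using m1 by (intro mult_right_mono) auto
      moreover have "(int s + 1) * m < 2^(s+1) * m" using s2 m1 by (intro mult_strict_right_mono) auto
      moreover have "(int s + 1) * m = int s * (m - 1) + (m - 1) + (int s + 1)"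
        by (simp add: algebra_simps)
      ultimately show ?thesis using n Lm by simp
    qed
    then show "p \<in> gowers_params s (2^L)" unfolding gowers_params_def nh using len by auto
  qed
  have fin: "finite (gowers_params s (2^L))"
    using PP_finite[of s L "\<lambda>_. 0"] unfolding PP0 .
  have "card G \<le> card (gowers_params s (2^L))" by (rule card_mono[OF fin sub])
  moreover have "card G = nat m * nat m ^ s" unfolding G_def
    by (simp add: card_cartesian_product card_lists_length_eq)
  moreover have "real (nat m) = 2^(L - (s+1))" unfolding m_def by simp
  ultimately have "real (nat m) * real (nat m) ^ s \<le> real (card (gowers_params s (2^L)))"
    by (metis of_nat_le_iff of_nat_mult of_nat_power)
  moreover have "real (nat m) * real (nat m) ^ s = 2^((L - (s+1)) * (s+1))"
  proof -
    have "real (nat m) * real (nat m) ^ s = ((2::real)^(L - (s+1)))^(s+1)"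
      using \<open>real (nat m) = 2^(L - (s+1))\<close> by simp
    also have "\<dots> = 2^((L - (s+1)) * (s+1))" by (simp only: power_mult)
    finally show ?thesis .
  qed
  ultimately show ?thesis by simp
qed



theorem corollary3p3:
  fixes s :: nat
  assumes "s \<ge> 2"
  shows "\<exists>c::real > 0. (\<lambda>L::nat. gowers_norm rudin_shapiro s (2 ^ L))
           \<in> O(\<lambda>L. 2 powr (- c * real L))"
proof -
  have s2: "2 \<le> s" using assms .
  define J where "J = Suc (jj s)"
  define N :: real where "N = 2^(s+1)"
  define \<theta> where "\<theta> = QQ s / N^J"
  define K where "K = EE s * (2^J)^(s+1) * 2^((s+1)*(s+1))"
  define \<gamma> where "\<gamma> = - log 2 \<theta> / real J"
  define n :: nat where "n = 2^s"
  have J0: "0 < J" unfolding J_def by simp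
  have Npos: "0 < N" unfolding N_def by simp
  have N1: "1 \<le> N" unfolding N_def using one_le_power[of "2::real" "s+1"] by simp
  have NJ: "N^J = real (card (Box s (jj s)))"
  proof -
    have "N^J = (2::real)^((s+1)*J)" unfolding N_def by (simp only: power_mult)
    also have "\<dots> = real ((2::nat)^(J*(s+1)))" by (simp add: mult.commute)
    finally show ?thesis unfolding card_Box J_def .
  qed
  have NJ4: "4 \<le> N^J"
  proof -
    have "(2::real)^2 \<le> 2^(s+1)" using s2 by (intro power_increasing) auto
    then have "4 \<le> N" unfolding N_def by simp
    moreover have "N \<le> N^J" using power_increasing[of 1 J N] J0 \<open>4 \<le> N\<close> by simp
    ultimately show ?thesis by linarith
  qed
  have QQe: "QQ s = N^J - 2" unfolding QQ_def NJ by simp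
  have th0: "0 < \<theta>" and th1: "\<theta> < 1" unfolding \<theta>_def QQe using NJ4 by (auto simp: field_simps)
  have "log 2 \<theta> < 0" using th0 th1 by simp
  then have g0: "0 < \<gamma>" unfolding \<gamma>_def using J0 by (simp add: divide_neg_pos)
  have K0: "0 \<le> K" unfolding K_def EE_def by simp
  have gp: "\<bar>gowers_pow rudin_shapiro s (2^L)\<bar> \<le> (K / \<theta>) * 2 powr (- \<gamma> * real L)" if L: "s + 1 \<le> L" for L
  proof -
    define q where "q = L div J"
    define D :: real where "D = 2^((L - (s+1)) * (s+1))"
    have D0: "0 < D" unfolding D_def by simp
    have cD: "D \<le> real (card (gowers_params s (2^L)))" unfolding D_def by (rule card_lower[OF L])
    have G: "\<bar>GG s L (\<lambda>_. False) (\<lambda>_. 0)\<bar> \<le> EE s * (2^J)^(s+1) * QQ s ^ q"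
      using GG_bound[OF s2, of L] unfolding J_def q_def .
    have "\<bar>gowers_pow rudin_shapiro s (2^L)\<bar> = \<bar>GG s L (\<lambda>_. False) (\<lambda>_. 0)\<bar> / real (card (gowers_params s (2^L)))"
      unfolding gp_eq by simp
    also have "\<dots> \<le> \<bar>GG s L (\<lambda>_. False) (\<lambda>_. 0)\<bar> / D"
      using D0 cD by (intro divide_left_mono) auto
    also have "\<dots> \<le> EE s * (2^J)^(s+1) * QQ s ^ q / D"
      using G D0 by (intro divide_right_mono) auto
    also have "QQ s ^ q = \<theta>^q * N^(J*q)" unfolding \<theta>_def using NJ4 Npos
      by (simp add: power_divide power_mult)
    also have "N^(J*q) \<le> D * 2^((s+1)*(s+1))"
    proof -
      have "J * q \<le> L" unfolding q_def by (simp add: mult.commute)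
      then have "N^(J*q) \<le> N^L" using N1 by (intro power_increasing) auto
      also have "N^L = D * 2^((s+1)*(s+1))"
      proof -
        obtain d where dL: "L = (s+1) + d" using le_Suc_ex[OF L] by blast
        have e1: "N^L = (2::real)^((s+1)*L)" unfolding N_def by (simp only: power_mult)
        have e2: "D * 2^((s+1)*(s+1)) = (2::real)^(d*(s+1) + (s+1)*(s+1))" unfolding D_def dL
          by (simp only: power_add diff_add_inverse)
        have e3: "(s+1)*L = d*(s+1) + (s+1)*(s+1)" unfolding dL by (simp add: algebra_simps)
        show ?thesis unfolding e1 e2 e3 ..
      qed
      finally show ?thesis .
    qed
    then have "EE s * (2^J)^(s+1) * (\<theta>^q * N^(J*q)) / D \<le> EE s * (2^J)^(s+1) * (\<theta>^q * (D * 2^((s+1)*(s+1)))) / D"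
      using D0 th0 by (intro divide_right_mono mult_left_mono) (auto simp: EE_def)
    also have "\<dots> = K * \<theta>^q"
    proof -
      have "EE s * (2^J)^(s+1) * (\<theta>^q * (D * 2^((s+1)*(s+1)))) = (K * \<theta>^q) * D"
        unfolding K_def by (simp only: mult_ac)
      then show ?thesis using D0 by simp
    qed
    also have "\<theta>^q \<le> \<theta> powr (real L / real J - 1)"
    proof -
      have "real L < real J * (real q + 1)"
      proof -
        have a: "L = J * q + L mod J" unfolding q_def by simp
        have b: "L mod J < J" using J0 by simp
        have "L < J * (q + 1)" using a b by (simp add: distrib_left)
        then have "real L < real (J * (q + 1))" by (simp only: of_nat_less_iff)
        then show ?thesis by (simp add: algebra_simps)
      qed
      then have "real L / real J < real q + 1" using J0 by (simp add: divide_less_eq mult.commute)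
      then have "real L / real J - 1 \<le> real q" by linarith
      then have "\<theta> powr real q \<le> \<theta> powr (real L / real J - 1)"
        using th0 th1 by (intro powr_mono') auto
      then show ?thesis using th0 by (simp add: powr_realpow)
    qed
    then have "K * \<theta>^q \<le> K * \<theta> powr (real L / real J - 1)" using K0 by (intro mult_left_mono) auto
    also have "\<theta> powr (real L / real J - 1) = \<theta> powr (real L / real J) / \<theta>"
      using th0 by (simp add: powr_diff)
    also have "\<theta> powr (real L / real J) = 2 powr (- \<gamma> * real L)"
    proof -
      have "\<theta> powr (real L / real J) = 2 powr (log 2 \<theta> * (real L / real J))"
        using th0 by (simp add: powr_def log_def)
      also have "log 2 \<theta> * (real L / real J) = - \<gamma> * real L" unfolding \<gamma>_def using J0 by simp
      finally show ?thesis .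
    qed
    finally have fin: "\<bar>gowers_pow rudin_shapiro s (2^L)\<bar> \<le> K * (2 powr (- \<gamma> * real L) / \<theta>)" .
    have "K * (2 powr (- \<gamma> * real L) / \<theta>) = (K / \<theta>) * 2 powr (- \<gamma> * real L)" by simp
    then show ?thesis using fin by simp
  qed
  define C where "C = root n (K / \<theta>)"
  define c where "c = \<gamma> / real n"
  have n0: "0 < n" unfolding n_def by simp
  have c0: "0 < c" unfolding c_def using g0 n0 by simp
  have "(\<lambda>L::nat. gowers_norm rudin_shapiro s (2 ^ L)) \<in> O(\<lambda>L. 2 powr (- c * real L))"
  proof (rule bigoI)
    show "\<forall>\<^sub>F L in at_top. norm (gowers_norm rudin_shapiro s (2 ^ L)) \<le> C * norm (2 powr (- c * real L))"
    proof (rule eventually_mono[OF eventually_ge_at_top[of "s+1"]])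
      fix L :: nat assume L: "s + 1 \<le> L"
      have "norm (gowers_norm rudin_shapiro s (2 ^ L)) = root n \<bar>gowers_pow rudin_shapiro s (2^L)\<bar>"
        unfolding gowers_norm_def n_def by (simp add: real_root_abs)
      also have "\<dots> \<le> root n ((K / \<theta>) * 2 powr (- \<gamma> * real L))"
        using gp[OF L] n0 by (simp add: real_root_le_iff)
      also have "\<dots> = C * root n (2 powr (- \<gamma> * real L))" unfolding C_def by (rule real_root_mult)
      also have "root n (2 powr (- \<gamma> * real L)) = 2 powr (- c * real L)"
        using n0 unfolding c_def by (simp add: root_powr_inverse powr_powr)
      finally show "norm (gowers_norm rudin_shapiro s (2 ^ L)) \<le> C * norm (2 powr (- c * real L))"
        by simp
    qed
  qed
  then show ?thesis using c0 by blast
qed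

end
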